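(* Let $\lambda>0$, let $f(x)=\lambda e^{-\lambda x}$ ($x\geq 0$) be the exponential density with hazard rate $\lambda$, and let $X$ have the $\Gamma(n,\lambda)$ distribution (density $\lambda^n x^{n-1}e^{-\lambda x}/(n-1)!$) with integer $n\geq 2$. For every integer $s\geq 2$, the density $g_s$ of the $s$-iterated distribution induced by $X$ satisfies $$g_s(x)=f_s^{n*}(x)=\frac{n-1}{n+s-2}\,f\ast f_s^{(n-1)*}(x)+\frac{s-1}{n+s-2}\,f(x),\qquad x\geq 0.$$
   Context: For a nonnegative absolutely continuous random variable $Y$ with density $f_Y$, set $\overline{T}_{Y,0}=f_Y$, $\mu_{Y,0}=1$, and for integers $s\geq 1$ define recursively $\overline{T}_{Y,s}(x)=\frac{1}{\mu_{Y,s-1}}\int_x^\infty\overline{T}_{Y,s-1}(t)\,dt$ and $\mu_{Y,s}=\int_0^\infty\overline{T}_{Y,s}(t)\,dt$. $\overline{T}_{Y,s}$ is the tail of the $s$-iterated distribution induced by $Y$, whose density is $\overline{T}_{Y,s-1}/\mu_{Y,s-1}$. For $k\geq 1$, $f_s^{k*}$ denotes the density of the $s$-iterated distribution induced by $S_k=X_1+\cdots+X_k$, where $X_i$ are i.i.d. with density $f$ (so $S_k\sim\Gamma(k,\lambda)$). Convolution: $g\ast h(x)=\int_0^x g(t)h(x-t)\,dt$. *)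

theory Defs
  imports "HOL-Analysis.Analysis"
begin

definition gamma_dens :: "nat \<Rightarrow> real \<Rightarrow> real \<Rightarrow> real" where
  "gamma_dens k l x =
     (if x \<ge> 0 then l ^ k * x ^ (k - 1) * exp (- l * x) / fact (k - 1) else 0)"

fun iter_tail :: "(real \<Rightarrow> real) \<Rightarrow> nat \<Rightarrow> (real \<Rightarrow> real) \<times> real" where
  "iter_tail f 0 = (f, 1)"
| "iter_tail f (Suc s) =
     (let T = fst (iter_tail f s); m = snd (iter_tail f s);
          T' = (\<lambda>x. integral {x..} T / m)
      in (T', integral {0..} T'))"

definition Tbar :: "(real \<Rightarrow> real) \<Rightarrow> nat \<Rightarrow> real \<Rightarrow> real" where
  "Tbar f s = fst (iter_tail f s)"

definition mu :: "(real \<Rightarrow> real) \<Rightarrow> nat \<Rightarrow> real" where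
  "mu f s = snd (iter_tail f s)"

definition iter_density :: "(real \<Rightarrow> real) \<Rightarrow> nat \<Rightarrow> real \<Rightarrow> real" where
  "iter_density f s x = Tbar f (s - 1) x / mu f (s - 1)"

definition conv :: "(real \<Rightarrow> real) \<Rightarrow> (real \<Rightarrow> real) \<Rightarrow> real \<Rightarrow> real" where
  "conv g h x = integral {0..x} (\<lambda>t. g t * h (x - t))"

end

theory Submission imports Defs begin

definition q :: "real \<Rightarrow> nat \<Rightarrow> real \<Rightarrow> real" where
  "q l k t = l ^ Suc k * t ^ k * exp (- l * t) / fact k"

definition S :: "real \<Rightarrow> nat \<Rightarrow> real \<Rightarrow> real" where
  "S l k t = (\<Sum>i\<le>k. q l i t)"

lemma gamma_dens_q: "t \<ge> 0 \<Longrightarrow> gamma_dens (Suc k) l t = q l k t"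
  by (simp add: gamma_dens_def q_def)

lemma q_nonneg: "l > 0 \<Longrightarrow> t \<ge> 0 \<Longrightarrow> q l k t \<ge> 0"
  by (simp add: q_def)

lemma q_cont: "continuous_on A (q l k)"
  unfolding q_def by (intro continuous_intros) auto

lemma S_cont: "continuous_on A (S l k)"
  unfolding S_def by (intro continuous_intros q_cont)

lemma dq0: "(q l 0 has_real_derivative (- l * q l 0 t)) (at t)"
  unfolding q_def by (auto intro!: derivative_eq_intros)

lemma dqSuc: "(q l (Suc k) has_real_derivative (l * q l k t - l * q l (Suc k) t)) (at t)"
proof -
  have "(q l (Suc k) has_real_derivative
     (l ^ Suc (Suc k) * (real (Suc k) * t ^ k) * exp (- l * t) + l ^ Suc (Suc k) * t ^ Suc k * (exp (- l * t) * (- l))) / fact (Suc k)) (at t)"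
    unfolding q_def by (auto intro!: derivative_eq_intros simp del: fact_Suc power_Suc)
  moreover have "(l ^ Suc (Suc k) * (real (Suc k) * t ^ k) * exp (- l * t) + l ^ Suc (Suc k) * t ^ Suc k * (exp (- l * t) * (- l))) / fact (Suc k)
     = l * q l k t - l * q l (Suc k) t"
    unfolding q_def by (simp add: field_simps del: of_nat_Suc)
  ultimately show ?thesis by simp
qed

lemma dS: "(S l k has_real_derivative (- l * q l k t)) (at t)"
proof (induction k)
  case 0
  then show ?case using dq0[of l t] by (simp add: S_def[abs_def])
next
  case (Suc k)
  have e: "S l (Suc k) = (\<lambda>t. S l k t + q l (Suc k) t)" by (auto simp: S_def)
  show ?case unfolding e using DERIV_add[OF Suc dqSuc[of l k t]] by (simp add: algebra_simps)
qed

lemma q_lim: assumes "l > 0" shows "((\<lambda>y. q l k y) \<longlongrightarrow> 0) at_top"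
proof -
  have e: "q l k y = l / fact k * ((l*y) ^ k / exp (l*y))" for y
    by (simp add: q_def power_mult_distrib exp_minus field_simps)
  have "((\<lambda>y. (l*y) ^ k / exp (l*y)) \<longlongrightarrow> 0) at_top"
    by (rule filterlim_compose[OF tendsto_power_div_exp_0 filterlim_tendsto_pos_mult_at_top[OF tendsto_const assms filterlim_ident]])
  then have "((\<lambda>y. l / fact k * ((l*y) ^ k / exp (l*y))) \<longlongrightarrow> l / fact k * 0) at_top"
    by (intro tendsto_intros)
  then show ?thesis unfolding e by simp
qed

lemma S_lim: assumes "l > 0" shows "((\<lambda>y. S l k y) \<longlongrightarrow> 0) at_top"
  unfolding S_def using tendsto_sum[of "{..k}" "\<lambda>i y. q l i y" "\<lambda>_. 0"] q_lim[OF assms] by simp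

lemma q_int: assumes "l > 0" "c \<ge> 0"
  shows "(q l k has_integral S l k c / l) {c..}"
proof (rule has_integral_to_inf)
  show "q l k integrable_on {c..y}" for y
    by (intro integrable_continuous_interval q_cont)
  show "q l k y \<ge> 0" if "y \<ge> c" for y using that assms q_nonneg by auto
  have der: "((\<lambda>t. - S l k t / l) has_vector_derivative q l k x) (at x within {c..y})" for x y
  proof -
    have "((\<lambda>t. (- 1 / l) * S l k t) has_real_derivative (- 1 / l) * (- l * q l k x)) (at x)"
      by (rule DERIV_cmult[OF dS])
    moreover have "(- 1 / l) * (- l * q l k x) = q l k x" using assms by simp
    moreover have "(\<lambda>t. (- 1 / l) * S l k t) = (\<lambda>t. - S l k t / l)" by auto
    ultimately have "((\<lambda>t. - S l k t / l) has_real_derivative q l k x) (at x)" by simp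
    then have "((\<lambda>t. - S l k t / l) has_real_derivative q l k x) (at x within {c..y})"
      by (rule has_field_derivative_at_within)
    then show ?thesis by (simp add: has_real_derivative_iff_has_vector_derivative)
  qed
  have "integral {c..y} (q l k) = S l k c / l - S l k y / l" if "c \<le> y" for y
  proof -
    have "(q l k has_integral ((- S l k y / l) - (- S l k c / l))) {c..y}"
      by (rule fundamental_theorem_of_calculus[OF that der])
    then show ?thesis by (simp add: integral_unique)
  qed
  then have ev: "\<forall>\<^sub>F y in at_top. S l k c / l - S l k y / l = integral {c..y} (q l k)"
    unfolding eventually_at_top_linorder by (intro exI[of _ c]) auto
  have "((\<lambda>y. S l k c / l - S l k y / l) \<longlongrightarrow> S l k c / l - 0 / l) at_top"
    using assms by (intro tendsto_intros S_lim) auto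
  then have "((\<lambda>y. S l k c / l - S l k y / l) \<longlongrightarrow> S l k c / l) at_top" by simp
  then show "((\<lambda>y. integral {c..y} (q l k)) \<longlongrightarrow> S l k c / l) at_top"
    by (rule Lim_transform_eventually[OF _ ev])
qed

lemma S_0: "S l k 0 = l"
  unfolding S_def by (induction k) (auto simp: q_def)

lemma conv_q: assumes "x \<ge> 0"
  shows "((\<lambda>t. q l 0 t * q l k (x - t)) has_integral q l (Suc k) x) {0..x}"
proof -
  define C where "C = l ^ Suc (Suc k) * exp (- l * x)"
  have e: "q l 0 t * q l k (x - t) = C * (x - t) ^ k / fact k" for t
  proof -
    have ee: "exp (- l * t) * exp (- l * (x - t)) = exp (- l * x)"
      by (simp flip: exp_add add: algebra_simps)
    show ?thesis unfolding q_def C_def by (simp add: mult_ac ee[simplified])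
  qed
  have "((\<lambda>t. C * (x - t) ^ k / fact k) has_integral
      ((- C * (x - x) ^ Suc k / fact (Suc k)) - (- C * (x - 0) ^ Suc k / fact (Suc k)))) {0..x}"
  proof (rule fundamental_theorem_of_calculus[OF assms])
    show "((\<lambda>t. - C * (x - t) ^ Suc k / fact (Suc k)) has_vector_derivative
       C * (x - t) ^ k / fact k) (at t within {0..x})" for t
    proof -
      have "((\<lambda>t. - C * (x - t) ^ Suc k / fact (Suc k)) has_real_derivative
         (- C * (real (Suc k) * (x - t) ^ k * (0 - 1)) / fact (Suc k))) (at t within {0..x})"
        by (auto intro!: derivative_eq_intros simp del: fact_Suc power_Suc of_nat_Suc)
      moreover have "(- C * (real (Suc k) * (x - t) ^ k * (0 - 1)) / fact (Suc k)) = C * (x - t) ^ k / fact k"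
        by (simp add: fact_Suc[of k] del: of_nat_Suc)
      ultimately show ?thesis unfolding has_real_derivative_iff_has_vector_derivative by simp
    qed
  qed
  then show ?thesis unfolding e by (simp add: q_def C_def mult_ac)
qed


fun A :: "nat \<Rightarrow> nat \<Rightarrow> nat \<Rightarrow> real" where
  "A N 0 k = (if k = N then 1 else 0)"
| "A N (Suc m) i = (\<Sum>k\<in>{i..N}. A N m k)"

lemma A_N: "A N m N = 1"
  by (induction m) auto

lemma A_nonneg: "A N m k \<ge> 0"
  by (induction m arbitrary: k) (auto intro: sum_nonneg)

lemma A_sum_pos: "(\<Sum>k\<le>N. A N m k) > 0"
proof -
  have "(\<Sum>k\<le>N. A N m k) \<ge> A N m N"
    by (rule member_le_sum) (auto intro: A_nonneg)
  then show ?thesis using A_N[of N m] by simp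
qed

lemma swap_S: "(\<Sum>k\<le>N. a k * S l k x) = (\<Sum>i\<le>N. (\<Sum>k\<in>{i..N}. a k) * q l i x)"
proof (induction N)
  case 0
  then show ?case by (simp add: S_def)
next
  case (Suc N)
  have "(\<Sum>i\<le>Suc N. (\<Sum>k\<in>{i..Suc N}. a k) * q l i x)
      = (\<Sum>i\<le>Suc N. (\<Sum>k\<in>{i..N}. a k) * q l i x + a (Suc N) * q l i x)"
    by (intro sum.cong refl) (auto simp: algebra_simps)
  also have "\<dots> = (\<Sum>i\<le>N. (\<Sum>k\<in>{i..N}. a k) * q l i x) + a (Suc N) * S l (Suc N) x"
    by (simp add: sum.distrib S_def sum_distrib_left[symmetric] distrib_left)
  finally show ?case using Suc by simp
qed

lemma int_comb: assumes "l > 0" "x \<ge> 0"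
  shows "((\<lambda>t. c * (\<Sum>k\<le>N. a k * q l k t)) has_integral
     c / l * (\<Sum>i\<le>N. (\<Sum>k\<in>{i..N}. a k) * q l i x)) {x..}"
proof -
  have "((\<lambda>t. (\<Sum>k\<le>N. a k * q l k t)) has_integral (\<Sum>k\<le>N. a k * (S l k x / l))) {x..}"
    by (intro has_integral_sum has_integral_mult_right q_int assms) auto
  then have "((\<lambda>t. c * (\<Sum>k\<le>N. a k * q l k t)) has_integral c * (\<Sum>k\<le>N. a k * (S l k x / l))) {x..}"
    by (rule has_integral_mult_right)
  moreover have "c * (\<Sum>k\<le>N. a k * (S l k x / l)) = c / l * (\<Sum>i\<le>N. (\<Sum>k\<in>{i..N}. a k) * q l i x)"
  proof -
    have "(\<Sum>k\<le>N. a k * (S l k x / l)) = (\<Sum>k\<le>N. a k * S l k x) / l"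
      by (simp add: sum_divide_distrib)
    then show ?thesis by (simp add: swap_S)
  qed
  ultimately show ?thesis by simp
qed

lemma int_comb0: assumes "l > 0"
  shows "((\<lambda>t. c * (\<Sum>k\<le>N. a k * q l k t)) has_integral c * (\<Sum>k\<le>N. a k)) {0..}"
proof -
  have "((\<lambda>t. (\<Sum>k\<le>N. a k * q l k t)) has_integral (\<Sum>k\<le>N. a k * (S l k 0 / l))) {0..}"
    by (intro has_integral_sum has_integral_mult_right q_int assms) auto
  then show ?thesis using assms by (simp add: S_0 has_integral_mult_right)
qed

lemma Tbar_Suc: "Tbar f (Suc m) = (\<lambda>x. integral {x..} (Tbar f m) / mu f m)"
  by (simp add: Tbar_def mu_def Let_def)

lemma mu_Suc: "mu f (Suc m) = integral {0..} (Tbar f (Suc m))"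
  by (simp add: Tbar_def mu_def Let_def)

lemma sum_ind: "(\<Sum>k\<le>(N::nat). (if k = N then 1 else 0) * g k) = (g N :: real)"
  by (simp add: if_distrib[where f="\<lambda>c. c * _"] cong: if_cong)

lemma inv: assumes "l > 0"
  shows "\<exists>c>0. (\<forall>x\<ge>0. Tbar (gamma_dens (Suc N) l) m x = c * (\<Sum>k\<le>N. A N m k * q l k x))
            \<and> mu (gamma_dens (Suc N) l) m = c * (\<Sum>k\<le>N. A N m k)"
proof (induction m)
  case 0
  show ?case
    by (intro exI[of _ 1]) (auto simp: Tbar_def mu_def gamma_dens_q sum_ind)
next
  case (Suc m)
  define f where "f = gamma_dens (Suc N) l"
  from Suc obtain c where c: "c > 0" and T: "\<forall>x\<ge>0. Tbar f m x = c * (\<Sum>k\<le>N. A N m k * q l k x)"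
    and M: "mu f m = c * (\<Sum>k\<le>N. A N m k)" unfolding f_def by blast
  have Mpos: "mu f m > 0" using M c A_sum_pos[of N m] by simp
  define c' where "c' = c / l / mu f m"
  have c': "c' > 0" using c Mpos assms by (simp add: c'_def)
  have T': "Tbar f (Suc m) x = c' * (\<Sum>k\<le>N. A N (Suc m) k * q l k x)" if "x \<ge> 0" for x
  proof -
    have "(Tbar f m has_integral c / l * (\<Sum>i\<le>N. A N (Suc m) i * q l i x)) {x..}"
      using int_comb[OF assms that, where c=c and N=N and a="A N m"] T that
      by (subst has_integral_cong[of _ _ "\<lambda>t. c * (\<Sum>k\<le>N. A N m k * q l k t)"]) auto
    then show ?thesis unfolding Tbar_Suc c'_def by (simp add: integral_unique)
  qed
  have "(Tbar f (Suc m) has_integral c' * (\<Sum>k\<le>N. A N (Suc m) k)) {0..}"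
    using int_comb0[OF assms, where c=c' and N=N and a="A N (Suc m)"] T'
    by (subst has_integral_cong[of _ _ "\<lambda>t. c' * (\<Sum>k\<le>N. A N (Suc m) k * q l k t)"]) auto
  then have "mu f (Suc m) = c' * (\<Sum>k\<le>N. A N (Suc m) k)"
    unfolding mu_Suc by (simp add: integral_unique)
  with T' c' show ?case unfolding f_def by blast
qed

lemma iter_density_form: assumes "l > 0" "x \<ge> 0"
  shows "iter_density (gamma_dens (Suc N) l) (Suc m) x = (\<Sum>k\<le>N. A N m k * q l k x) / (\<Sum>k\<le>N. A N m k)"
proof -
  obtain c where "c > 0" "\<forall>x\<ge>0. Tbar (gamma_dens (Suc N) l) m x = c * (\<Sum>k\<le>N. A N m k * q l k x)"
    "mu (gamma_dens (Suc N) l) m = c * (\<Sum>k\<le>N. A N m k)" using inv[OF assms(1)] by blast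
  then show ?thesis using assms(2) by (simp add: iter_density_def)
qed

lemma A_closed: "k \<le> N \<Longrightarrow> A N (Suc m) k = real ((N - k + m) choose (N - k))"
proof (induction m arbitrary: k)
  case 0
  have "(\<Sum>j\<in>{k..N}. A N 0 j) = 1"
    using 0 by (simp add: if_distrib cong: if_cong) 
  then show ?case by simp
next
  case (Suc m)
  have "A N (Suc (Suc m)) k = (\<Sum>j\<in>{k..N}. real ((N - j + m) choose (N - j)))"
    using Suc by simp
  also have "\<dots> = (\<Sum>d\<le>N - k. real ((m + d) choose d))"
    by (rule sum.reindex_bij_witness[where i="\<lambda>d. N - d" and j="\<lambda>j. N - j"])
       (use Suc.prems in \<open>auto simp: add.commute\<close>)
  also have "\<dots> = real (Suc (m + (N - k)) choose (N - k))"
    by (simp flip: of_nat_sum add: sum_choose_lower)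
  finally show ?case by (simp add: add_ac)
qed

lemma A_sum_closed: "(\<Sum>k\<le>N. A N (Suc m) k) = real (Suc (m + N) choose N)"
proof -
  have "(\<Sum>k\<le>N. A N (Suc m) k) = (\<Sum>k\<le>N. real ((N - k + m) choose (N - k)))"
    by (intro sum.cong refl) (use A_closed in \<open>simp del: A.simps\<close>)
  also have "\<dots> = (\<Sum>d\<le>N. real ((m + d) choose d))"
    by (rule sum.reindex_bij_witness[where i="\<lambda>d. N - d" and j="\<lambda>j. N - j"])
       (auto simp: add.commute)
  also have "\<dots> = real (Suc (m + N) choose N)"
    by (simp flip: of_nat_sum add: sum_choose_lower)
  finally show ?thesis .
qed


lemma conv_form: assumes "l > 0" "x \<ge> 0"
  shows "conv (gamma_dens 1 l) (iter_density (gamma_dens (Suc N) l) (Suc m)) x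
    = (\<Sum>k\<le>N. A N m k * q l (Suc k) x) / (\<Sum>k\<le>N. A N m k)"
proof -
  define D where "D = (\<Sum>k\<le>N. A N m k)"
  have "conv (gamma_dens 1 l) (iter_density (gamma_dens (Suc N) l) (Suc m)) x
      = integral {0..x} (\<lambda>t. (\<Sum>k\<le>N. A N m k / D * (q l 0 t * q l k (x - t))))"
    unfolding conv_def
  proof (rule integral_cong)
    fix t assume t: "t \<in> {0..x}"
    then have "gamma_dens 1 l t = q l 0 t" using gamma_dens_q[of t 0 l] by simp
    moreover have "iter_density (gamma_dens (Suc N) l) (Suc m) (x - t) = (\<Sum>k\<le>N. A N m k * q l k (x - t)) / D"
      using iter_density_form[OF assms(1), of "x - t"] t by (simp add: D_def)
    ultimately show "gamma_dens 1 l t * iter_density (gamma_dens (Suc N) l) (Suc m) (x - t)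
       = (\<Sum>k\<le>N. A N m k / D * (q l 0 t * q l k (x - t)))"
      by (simp add: sum_divide_distrib sum_distrib_left mult_ac)
  qed
  also have "\<dots> = (\<Sum>k\<le>N. A N m k / D * q l (Suc k) x)"
    by (intro integral_unique has_integral_sum has_integral_mult_right conv_q assms) auto
  finally show ?thesis by (simp add: D_def sum_divide_distrib)
qed

theorem proposition2:
  fixes l :: real and n s :: nat and x :: real
  assumes "l > 0" and "n \<ge> 2" and "s \<ge> 2" and "x \<ge> 0"
  shows "iter_density (gamma_dens n l) s x =
           real (n - 1) / real (n + s - 2) *
             conv (gamma_dens 1 l) (iter_density (gamma_dens (n - 1) l) s) x
           + real (s - 1) / real (n + s - 2) * gamma_dens 1 l x"
proof -
  obtain p where n: "n = Suc (Suc p)" using assms(2) by (metis add_2_eq_Suc le_Suc_ex)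
  obtain m where s: "s = Suc (Suc m)" using assms(3) by (metis add_2_eq_Suc le_Suc_ex)
  define a where "a k = real ((p - k + m) choose (p - k))" for k
  define D0 where "D0 = real (Suc (m + p) choose p)"
  define D1 where "D1 = real (Suc (m + Suc p) choose Suc p)"
  define c0 where "c0 = real ((Suc p + m) choose Suc p)"
  define Y where "Y = (\<Sum>k\<le>p. a k * q l (Suc k) x)"
  have D0pos: "D0 > 0" unfolding D0_def of_nat_0_less_iff zero_less_binomial_iff by simp
  have D1pos: "D1 > 0" unfolding D1_def of_nat_0_less_iff zero_less_binomial_iff by simp
  have r1n: "Suc p * (Suc (Suc (m + p)) choose Suc p) = Suc (Suc (m + p)) * (Suc (m + p) choose p)"
    by (rule Suc_times_binomial)
  have r1: "real (Suc p) * D1 = real (Suc (Suc (m + p))) * D0"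
  proof -
    have e: "Suc (m + Suc p) = Suc (Suc (m + p))" by simp
    show ?thesis unfolding D1_def D0_def e by (simp only: of_nat_mult[symmetric] r1n)
  qed
  have r2n: "Suc m * (Suc (Suc (m + p)) choose Suc p) = Suc (Suc (m + p)) * (Suc (m + p) choose Suc p)"
    using binomial_absorb_comp[of "Suc (Suc (m + p))" "Suc p"] by (simp del: binomial_Suc_Suc)
  have r2: "real (Suc m) * D1 = real (Suc (Suc (m + p))) * c0"
  proof -
    have e: "Suc (m + Suc p) = Suc (Suc (m + p))" "Suc p + m = Suc (m + p)" by simp_all
    show ?thesis unfolding D1_def c0_def e by (simp only: of_nat_mult[symmetric] r2n)
  qed
  have L: "iter_density (gamma_dens n l) s x = (c0 * q l 0 x + Y) / D1"
  proof -
    have "iter_density (gamma_dens n l) s x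
        = (\<Sum>k\<le>Suc p. A (Suc p) (Suc m) k * q l k x) / (\<Sum>k\<le>Suc p. A (Suc p) (Suc m) k)"
      unfolding n s by (rule iter_density_form[OF assms(1,4)])
    also have "(\<Sum>k\<le>Suc p. A (Suc p) (Suc m) k) = D1"
      unfolding A_sum_closed D1_def ..
    also have "(\<Sum>k\<le>Suc p. A (Suc p) (Suc m) k * q l k x) = c0 * q l 0 x + Y"
      unfolding sum.atMost_Suc_shift Y_def
      by (simp del: A.simps add: A_closed a_def c0_def)
    finally show ?thesis .
  qed
  have R: "conv (gamma_dens 1 l) (iter_density (gamma_dens (n - 1) l) s) x = Y / D0"
  proof -
    have "conv (gamma_dens 1 l) (iter_density (gamma_dens (n - 1) l) s) x
        = (\<Sum>k\<le>p. A p (Suc m) k * q l (Suc k) x) / (\<Sum>k\<le>p. A p (Suc m) k)"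
      unfolding n s diff_Suc_1 by (rule conv_form[OF assms(1,4)])
    also have "(\<Sum>k\<le>p. A p (Suc m) k) = D0"
      unfolding A_sum_closed D0_def ..
    also have "(\<Sum>k\<le>p. A p (Suc m) k * q l (Suc k) x) = Y"
      unfolding Y_def by (intro sum.cong refl) (simp del: A.simps add: A_closed a_def)
    finally show ?thesis .
  qed
  have g: "gamma_dens 1 l x = q l 0 x" using gamma_dens_q[OF assms(4), of 0 l] by simp
  have rn: "real (n - 1) = real (Suc p)" "real (n + s - 2) = real (Suc (Suc (m + p)))"
    "real (s - 1) = real (Suc m)" unfolding n s by simp_all
  have P: "real (Suc (Suc (m + p))) > 0" by simp
  show ?thesis unfolding L R g rn
  proof -
    have e1: "real (Suc p) / real (Suc (Suc (m + p))) * (Y / D0) = Y / D1"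
      using r1 D0pos D1pos P by (simp add: field_simps del: of_nat_Suc)
    have e2: "real (Suc m) / real (Suc (Suc (m + p))) * q l 0 x = c0 * q l 0 x / D1"
      using r2 D1pos P by (simp add: field_simps del: of_nat_Suc)
    show "(c0 * q l 0 x + Y) / D1 = real (Suc p) / real (Suc (Suc (m + p))) * (Y / D0) +
        real (Suc m) / real (Suc (Suc (m + p))) * q l 0 x"
      unfolding e1 e2 by (simp add: add_divide_distrib)
  qed
qed

end
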